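(* Let $t_{kl}\ge0$ for $(k,l)\neq(0,0)$, let $\mathcal{G}=\sum_{k,l}t_{kl}\mathcal{L}_{kl}$ and $\Phi=e^{\mathcal{G}}\in\mathcal{A}_N^Q$. Then $\mathcal{D}_h(\mathcal{G})=\sum_{k=1}^{N-1}t_k\mathcal{K}_k$ with $t_k=\sum_lt_{kl}$, and $$\mathcal{D}_h\big(e^{\mathcal{G}}\big)=e^{\mathcal{D}_h(\mathcal{G})}=\exp\Big(\sum_{k=1}^{N-1}t_k\mathcal{K}_k\Big);$$ in particular the circulant bistochastic matrix $\mathcal{D}_h(\Phi)$ belongs to $\mathcal{A}_N^C$ (hyper-decoherence commutes with the semigroup time evolution).
   Context: Let $N\ge2$, $\omega=e^{2\pi i/N}$, $X|j\rangle=|j\oplus1\rangle$ (addition mod $N$), $Z=\mathrm{diag}(1,\omega,\dots,\omega^{N-1})$, Weyl unitaries $U_{kl}=X^kZ^l$. Superoperators are $N^2\times N^2$ matrices acting on $|A\rangle\rangle=\sum A_{ij}|i\rangle|j\rangle$ ($\rho\mapsto K\rho K^\dagger$ corresponds to $K\otimes\overline K$). $\mathcal{L}_{kl}=U_{kl}\otimes\overline{U}_{kl}-\mathbb{I}_{N^2}$; $\mathcal{A}_N^Q$ is the set of $\exp(\sum_{(k,l)\ne(0,0)}t_{kl}\mathcal{L}_{kl})$ with $t_{kl}\ge0$. Hyper-decoherence of a superoperator $M$ is the $N\times N$ matrix $\mathcal{D}_h(M)_{ij}=\langle ii|M|jj\rangle$. $\mathcal{K}_k=X^k-\mathbb{I}_N$,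 and $\mathcal{A}_N^C$ is the set of $\exp(\sum_{k=1}^{N-1}t_k\mathcal{K}_k)$ with $t_k\ge0$. *)

theory Defs
  imports Complex_Main
begin

text \<open>Square matrices are represented as functions \<open>'a \<Rightarrow> 'a \<Rightarrow> complex\<close>
  together with an explicit finite index set \<open>I\<close>; only entries with
  indices in \<open>I\<close> are meaningful.  For \<open>N \<times> N\<close> matrices \<open>I = {..<N}\<close>;
  for superoperators (\<open>N^2 \<times> N^2\<close>) the index set is \<open>{..<N} \<times> {..<N}\<close>,
  the pair \<open>(i,j)\<close> standing for the basis vector \<open>|i\<rangle>|j\<rangle>\<close>.\<close>

type_synonym 'a cmat = "'a \<Rightarrow> 'a \<Rightarrow> complex"

definition mone :: "'a cmat" where
  "mone = (\<lambda>i j. if i = j then 1 else 0)"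

definition mmult :: "'a set \<Rightarrow> 'a cmat \<Rightarrow> 'a cmat \<Rightarrow> 'a cmat" where
  "mmult I A B = (\<lambda>i j. \<Sum>k\<in>I. A i k * B k j)"

fun mpow :: "'a set \<Rightarrow> 'a cmat \<Rightarrow> nat \<Rightarrow> 'a cmat" where
  "mpow I A 0 = mone"
| "mpow I A (Suc n) = mmult I A (mpow I A n)"

definition mexp :: "'a set \<Rightarrow> 'a cmat \<Rightarrow> 'a cmat" where
  "mexp I A = (\<lambda>i j. \<Sum>n. mpow I A n i j / of_nat (fact n))"

definition omega :: "nat \<Rightarrow> complex" where
  "omega N = cis (2 * pi / real N)"

definition Xm :: "nat \<Rightarrow> nat cmat" where
  "Xm N = (\<lambda>i j. if i = (j + 1) mod N then 1 else 0)"

definition Zm :: "nat \<Rightarrow> nat cmat" where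
  "Zm N = (\<lambda>i j. if i = j then omega N ^ i else 0)"

definition Uw :: "nat \<Rightarrow> nat \<Rightarrow> nat \<Rightarrow> nat cmat" where
  "Uw N k l = mmult {..<N} (mpow {..<N} (Xm N) k) (mpow {..<N} (Zm N) l)"

text \<open>\<open>K \<otimes> conj K\<close> acting on \<open>|A\<rangle>\<rangle> = \<Sum> A_ij |i\<rangle>|j\<rangle>\<close>.\<close>
definition tensor_conj :: "nat cmat \<Rightarrow> (nat \<times> nat) cmat" where
  "tensor_conj K = (\<lambda>(i, j) (i', j'). K i i' * cnj (K j j'))"

definition superidx :: "nat \<Rightarrow> (nat \<times> nat) set" where
  "superidx N = {..<N} \<times> {..<N}"

definition Lsup :: "nat \<Rightarrow> nat \<Rightarrow> nat \<Rightarrow> (nat \<times> nat) cmat" where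
  "Lsup N k l = (\<lambda>a b. tensor_conj (Uw N k l) a b - mone a b)"

definition hyper_dec :: "(nat \<times> nat) cmat \<Rightarrow> nat cmat" where
  "hyper_dec M = (\<lambda>i j. M (i, i) (j, j))"

definition Kc :: "nat \<Rightarrow> nat \<Rightarrow> nat cmat" where
  "Kc N k = (\<lambda>i j. mpow {..<N} (Xm N) k i j - mone i j)"

definition weyl_idx :: "nat \<Rightarrow> (nat \<times> nat) set" where
  "weyl_idx N = ({..<N} \<times> {..<N}) - {(0, 0)}"

definition qgen :: "nat \<Rightarrow> (nat \<Rightarrow> nat \<Rightarrow> real) \<Rightarrow> (nat \<times> nat) cmat" where
  "qgen N t = (\<lambda>a b. \<Sum>(k, l)\<in>weyl_idx N. complex_of_real (t k l) * Lsup N k l a b)"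

definition cgen :: "nat \<Rightarrow> (nat \<Rightarrow> real) \<Rightarrow> nat cmat" where
  "cgen N s = (\<lambda>i j. \<Sum>k = 1..N - 1. complex_of_real (s k) * Kc N k i j)"

definition A_Q :: "nat \<Rightarrow> (nat \<times> nat) cmat set" where
  "A_Q N = {\<Phi>. \<exists>t. (\<forall>(k, l)\<in>weyl_idx N. t k l \<ge> 0) \<and>
      (\<forall>a\<in>superidx N. \<forall>b\<in>superidx N. \<Phi> a b = mexp (superidx N) (qgen N t) a b)}"

definition A_C :: "nat \<Rightarrow> nat cmat set" where
  "A_C N = {M. \<exists>s. (\<forall>k\<in>{1..N - 1}. s k \<ge> 0) \<and>
      (\<forall>i<N. \<forall>j<N. M i j = mexp {..<N} (cgen N s) i j)}"

end

theory Submission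
  imports Defs
begin

lemma sum_single:
  assumes "finite A" "c \<in> A" "\<forall>d\<in>A. d \<noteq> c \<longrightarrow> g d = 0"
  shows "sum g A = g c"
proof -
  have "sum g A = g c + sum g (A - {c})" using assms by (simp add: sum.remove)
  also have "sum g (A - {c}) = 0" using assms by (intro sum.neutral) auto
  finally show ?thesis by simp
qed

lemma mpow_X:
  assumes "j < N"
  shows "mpow {..<N} (Xm N) k i j = (if i = (j + k) mod N then 1 else 0)"
  using assms
proof (induction k arbitrary: i)
  case 0
  then show ?case by (simp add: mone_def)
next
  case (Suc k)
  have "mpow {..<N} (Xm N) (Suc k) i j
      = (\<Sum>m<N. Xm N i m * mpow {..<N} (Xm N) k m j)" by (simp add: mmult_def)
  also have "\<dots> = Xm N i ((j + k) mod N) * mpow {..<N} (Xm N) k ((j + k) mod N) j"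
    using Suc by (intro sum_single) auto
  also have "\<dots> = (if i = ((j + k) mod N + 1) mod N then 1 else 0)"
    using Suc by (simp add: Xm_def)
  also have "((j + k) mod N + 1) mod N = (j + Suc k) mod N"
    by (simp add: mod_Suc_eq)
  finally show ?case .
qed

lemma mpow_Z:
  assumes "j < N"
  shows "mpow {..<N} (Zm N) l i j = (if i = j then omega N ^ (j * l) else 0)"
  using assms
proof (induction l arbitrary: i)
  case 0
  then show ?case by (simp add: mone_def)
next
  case (Suc l)
  have "mpow {..<N} (Zm N) (Suc l) i j
      = (\<Sum>m<N. Zm N i m * mpow {..<N} (Zm N) l m j)" by (simp add: mmult_def)
  also have "\<dots> = Zm N i j * mpow {..<N} (Zm N) l j j"
    using Suc by (intro sum_single) auto
  also have "\<dots> = (if i = j then omega N ^ (j * Suc l) else 0)"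
    using Suc by (simp add: Zm_def power_add power_mult_distrib mult.commute)
  finally show ?case .
qed

lemma Uw_eq:
  assumes "j < N"
  shows "Uw N k l i j = (if i = (j + k) mod N then omega N ^ (j * l) else 0)"
proof -
  have "Uw N k l i j = (\<Sum>m<N. mpow {..<N} (Xm N) k i m * mpow {..<N} (Zm N) l m j)"
    by (simp add: Uw_def mmult_def)
  also have "\<dots> = mpow {..<N} (Xm N) k i j * mpow {..<N} (Zm N) l j j"
    using assms by (intro sum_single) (auto simp: mpow_Z)
  also have "\<dots> = (if i = (j + k) mod N then omega N ^ (j * l) else 0)"
    using assms by (simp add: mpow_X mpow_Z)
  finally show ?thesis .
qed

lemma omega_cnj: "omega N * cnj (omega N) = 1"
  by (simp add: omega_def cis_cnj cis_mult)

lemma omega_pow_cnj: "omega N ^ n * cnj (omega N) ^ n = 1"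
  by (metis omega_cnj power_mult_distrib power_one)

lemma Lsup_off:
  assumes "a \<noteq> b" "c < N"
  shows "Lsup N k l (a, b) (c, c) = 0"
  using assms by (auto simp: Lsup_def tensor_conj_def Uw_eq mone_def)

lemma Lsup_diag:
  assumes "i < N" "j < N"
  shows "Lsup N k l (i, i) (j, j) = Kc N k i j"
  using assms by (simp add: Lsup_def tensor_conj_def Uw_eq mone_def Kc_def mpow_X omega_pow_cnj)

lemma G_off:
  assumes "a \<noteq> b" "c < N"
  shows "qgen N t (a, b) (c, c) = 0"
  using assms by (simp add: qgen_def Lsup_off case_prod_beta)

lemma G_diag:
  assumes "i < N" "j < N"
  shows "hyper_dec (qgen N t) i j = (\<Sum>(k, l)\<in>weyl_idx N. complex_of_real (t k l) * Kc N k i j)"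
  using assms by (simp add: hyper_dec_def qgen_def Lsup_diag case_prod_beta)

lemma mpow_off:
  assumes "a \<noteq> b" "j < N"
  shows "mpow (superidx N) (qgen N t) n (a, b) (j, j) = 0"
  using assms
proof (induction n arbitrary: a b)
  case 0
  then show ?case by (simp add: mone_def)
next
  case (Suc n)
  have "mpow (superidx N) (qgen N t) (Suc n) (a, b) (j, j)
    = (\<Sum>x\<in>superidx N. qgen N t (a, b) x * mpow (superidx N) (qgen N t) n x (j, j))"
    by (simp add: mmult_def)
  also have "\<dots> = 0"
  proof (intro sum.neutral ballI)
    fix x assume x: "x \<in> superidx N"
    obtain c d where cd: "x = (c, d)" by (cases x)
    show "qgen N t (a, b) x * mpow (superidx N) (qgen N t) n x (j, j) = 0"
    proof (cases "c = d")
      case True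
      then show ?thesis using x cd Suc.prems G_off by (auto simp: superidx_def)
    next
      case False
      then show ?thesis using cd Suc.IH Suc.prems by auto
    qed
  qed
  finally show ?case .
qed

lemma mpow_hyper:
  assumes "i < N" "j < N"
  shows "mpow (superidx N) (qgen N t) n (i, i) (j, j) = mpow {..<N} (hyper_dec (qgen N t)) n i j"
  using assms
proof (induction n arbitrary: i)
  case 0
  then show ?case by (simp add: mone_def)
next
  case (Suc n)
  let ?G = "qgen N t"
  have "mpow (superidx N) ?G (Suc n) (i, i) (j, j)
    = (\<Sum>x\<in>{..<N} \<times> {..<N}. ?G (i, i) x * mpow (superidx N) ?G n x (j, j))"
    by (simp add: mmult_def superidx_def)
  also have "\<dots> = (\<Sum>c<N. \<Sum>d<N. ?G (i, i) (c, d) * mpow (superidx N) ?G n (c, d) (j, j))"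
    by (simp add: sum.cartesian_product)
  also have "\<dots> = (\<Sum>c<N. ?G (i, i) (c, c) * mpow (superidx N) ?G n (c, c) (j, j))"
  proof (intro sum.cong refl)
    fix c assume c: "c \<in> {..<N}"
    show "(\<Sum>d<N. ?G (i, i) (c, d) * mpow (superidx N) ?G n (c, d) (j, j))
        = ?G (i, i) (c, c) * mpow (superidx N) ?G n (c, c) (j, j)"
      using c Suc.prems by (intro sum_single) (auto simp: mpow_off)
  qed
  also have "\<dots> = (\<Sum>c<N. hyper_dec ?G i c * mpow {..<N} (hyper_dec ?G) n c j)"
    using Suc by (intro sum.cong refl) (simp add: hyper_dec_def)
  also have "\<dots> = mpow {..<N} (hyper_dec ?G) (Suc n) i j"
    by (simp add: mmult_def)
  finally show ?case .
qed

lemma mpow_cong: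
  assumes "\<forall>i\<in>I. \<forall>j\<in>I. A i j = B i j" "i \<in> I" "j \<in> I"
  shows "mpow I A n i j = mpow I B n i j"
  using assms(2)
proof (induction n arbitrary: i)
  case 0
  then show ?case by simp
next
  case (Suc n)
  then show ?case using assms by (simp add: mmult_def)
qed

lemma mexp_cong:
  assumes "\<forall>i\<in>I. \<forall>j\<in>I. A i j = B i j" "i \<in> I" "j \<in> I"
  shows "mexp I A i j = mexp I B i j"
  using mpow_cong[OF assms] by (simp add: mexp_def)

theorem theorem3:
  fixes N :: nat and t :: "nat \<Rightarrow> nat \<Rightarrow> real"
  assumes "N \<ge> 2"
    and "\<forall>(k, l)\<in>weyl_idx N. t k l \<ge> 0"
  defines "G \<equiv> qgen N t"
    and "\<Phi> \<equiv> mexp (superidx N) (qgen N t)"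
    and "tk \<equiv> (\<lambda>k. \<Sum>l<N. t k l)"
  shows "\<Phi> \<in> A_Q N \<and>
    (\<forall>i<N. \<forall>j<N. hyper_dec G i j = cgen N tk i j) \<and>
    (\<forall>i<N. \<forall>j<N. hyper_dec (mexp (superidx N) G) i j = mexp {..<N} (hyper_dec G) i j) \<and>
    (\<forall>i<N. \<forall>j<N. hyper_dec (mexp (superidx N) G) i j = mexp {..<N} (cgen N tk) i j) \<and>
    hyper_dec \<Phi> \<in> A_C N"
proof -
  have P1: "\<Phi> \<in> A_Q N" using assms(2) unfolding A_Q_def \<Phi>_def by blast
  have P2: "\<forall>i<N. \<forall>j<N. hyper_dec G i j = cgen N tk i j"
  proof (intro allI impI)
    fix i j assume ij: "i < N" "j < N"
    define f where "f = (\<lambda>(k, l). complex_of_real (t k l) * Kc N k i j)"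
    have f0: "f (0, l) = 0" for l using ij by (simp add: f_def Kc_def mpow_X mone_def)
    have "hyper_dec G i j = sum f (weyl_idx N)"
      using ij by (simp add: G_def G_diag f_def)
    also have "sum f (weyl_idx N) = sum f ({..<N} \<times> {..<N})"
    proof -
      have "sum f ({..<N} \<times> {..<N}) = f (0, 0) + sum f (({..<N} \<times> {..<N}) - {(0,0)})"
        using assms(1) by (intro sum.remove) auto
      then show ?thesis by (simp add: weyl_idx_def f0)
    qed
    also have "\<dots> = (\<Sum>k<N. \<Sum>l<N. f (k, l))" by (simp add: sum.cartesian_product)
    also have "\<dots> = (\<Sum>k\<in>{1..N-1}. \<Sum>l<N. f (k, l))"
    proof -
      have "{..<N} = insert 0 {1..N-1}" using assms(1) by auto
      then show ?thesis by (simp add: f0)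
    qed
    also have "\<dots> = cgen N tk i j"
      by (simp add: cgen_def tk_def f_def sum_distrib_right)
    finally show "hyper_dec G i j = cgen N tk i j" .
  qed
  have P3: "\<forall>i<N. \<forall>j<N. hyper_dec (mexp (superidx N) G) i j = mexp {..<N} (hyper_dec G) i j"
    by (simp add: hyper_dec_def mexp_def G_def mpow_hyper[simplified hyper_dec_def])
  have P4: "\<forall>i<N. \<forall>j<N. hyper_dec (mexp (superidx N) G) i j = mexp {..<N} (cgen N tk) i j"
    using P2 P3 mexp_cong[of "{..<N}" "hyper_dec G" "cgen N tk"] by simp
  have P5: "hyper_dec \<Phi> \<in> A_C N"
    unfolding A_C_def
  proof (intro CollectI exI conjI ballI allI impI)
    fix k assume k: "k \<in> {1..N - 1}"
    show "0 \<le> tk k" unfolding tk_def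
      using assms(2) k by (intro sum_nonneg) (auto simp: weyl_idx_def)
  next
    fix i j assume "i < N" "j < N"
    then show "hyper_dec \<Phi> i j = mexp {..<N} (cgen N tk) i j"
      using P4 by (simp add: \<Phi>_def G_def)
  qed
  show ?thesis using P1 P2 P3 P4 P5 by blast
qed

end
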